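(* Let $\mathbf D_1\in\mathcal D$. Every $\mathbf D_2\in\mathcal D$ can be written as $\mathbf D_2=\mathbf D(\mathbf D_1,\mathbf W,\mathbf v,\tau)$ with $\mathbf W\in\mathcal W_{\mathbf D_1}$, $\mathbf v\in\mathcal S^p_+$ and $\tau\ge0$ such that $\tau\|\mathbf v\|_\infty\le\pi$. Moreover, for all $j$, $$\frac2\pi\tau\mathbf v_j\le\|\mathbf d_2^j-\mathbf d_1^j\|_2=2\sin\Big(\frac{\tau\mathbf v_j}{2}\Big)\le\tau\mathbf v_j,\qquad \frac2\pi\tau\le\|\mathbf D_2-\mathbf D_1\|_F\le\tau.$$ Conversely, $\mathbf D_1=\mathbf D(\mathbf D_2,\mathbf W',\mathbf v,\tau)$ for some $\mathbf W'\in\mathcal W_{\mathbf D_2}$, with the same $\mathbf v$ and $\tau$.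
   Context: $\mathcal D$: real $m\times p$ matrices with unit $\ell_2$-norm columns; $\mathbf d^j$ denotes the $j$-th column. $\mathcal S^p_+=\{\mathbf v\in\mathbb R^p_+:\|\mathbf v\|_2=1\}$. For $\mathbf D\in\mathcal D$, $\mathcal W_{\mathbf D}=\{\mathbf W\in\mathbb R^{m\times p}:\mathrm{diag}(\mathbf W^\top\mathbf D)=\mathbf 0,\mathrm{diag}(\mathbf W^\top\mathbf W)=\mathbf 1\}$, and $\mathbf D(\mathbf D,\mathbf W,\mathbf v,t)=\mathbf D\,\mathrm{Diag}[\cos(\mathbf vt)]+\mathbf W\,\mathrm{Diag}[\sin(\mathbf vt)]$ (cos, sin entrywise). *)

theory Defs
  imports "HOL-Analysis.Analysis"
begin

text \<open>m x p real matrices are represented as real^'p^'m (rows indexed by 'm, columns by 'p). The Frobenius norm of a matrix is the library norm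
  on real^'p^'m (the L2 norm of the nested vector).\<close>

definition dict_set :: "(real^'p^'m) set" where
  "dict_set = {D. \<forall>j. norm (column j D) = 1}"

definition Sp_plus :: "(real^'p) set" where
  "Sp_plus = {v. (\<forall>j. 0 \<le> v $ j) \<and> norm v = 1}"

definition Diag :: "real^'p \<Rightarrow> real^'p^'p" where
  "Diag v = (\<chi> i j. if i = j then v $ i else 0)"

definition W_set :: "real^'p^'m \<Rightarrow> (real^'p^'m) set" where
  "W_set D = {W. (\<forall>j. (transpose W ** D) $ j $ j = 0) \<and> (\<forall>j. (transpose W ** W) $ j $ j = 1)}"

definition geod :: "real^'p^'m \<Rightarrow> real^'p^'m \<Rightarrow> real^'p \<Rightarrow> real \<Rightarrow> real^'p^'m" where
  "geod D W v t = D ** Diag (\<chi> j. cos (v $ j * t)) + W ** Diag (\<chi> j. sin (v $ j * t))"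

end

theory Submission imports Defs begin

lemma jordan:
  fixes y :: real assumes "0 \<le> y" "y \<le> pi/2"
  shows "2/pi*y \<le> sin y"
proof -
  let ?h = "\<lambda>y. 2/pi*y - sin y"
  have cv: "convex_on {0..pi/2} ?h"
  proof (rule f''_ge0_imp_convex[where f' = "\<lambda>y. 2/pi - cos y" and f'' = "\<lambda>y. sin y"])
    show "convex {0..pi/2}" by simp
    fix x assume x: "x \<in> {0..pi/2}"
    show "DERIV ?h x :> 2/pi - cos x" by (auto intro!: derivative_eq_intros)
    show "DERIV (\<lambda>y. 2/pi - cos y) x :> sin x" by (auto intro!: derivative_eq_intros)
    show "0 \<le> sin x" using x by (intro sin_ge_zero) auto
  qed
  define t where "t = y / (pi/2)"
  have t: "0 \<le> t" "t \<le> 1" using assms pi_gt_zero unfolding t_def by (auto simp: field_simps)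
  have "?h ((1 - t) *\<^sub>R 0 + t *\<^sub>R (pi/2)) \<le> (1 - t) * ?h 0 + t * ?h (pi/2)"
    by (rule convex_onD[OF cv]) (use t in auto)
  moreover have "(1 - t) *\<^sub>R 0 + t *\<^sub>R (pi/2) = y" unfolding t_def using pi_gt_zero by simp
  ultimately have "t \<le> sin y" by simp
  hence "pi * t \<le> pi * sin y" using pi_gt_zero by (intro mult_left_mono) auto
  moreover have "pi * t = 2 * y" unfolding t_def using pi_gt_zero by simp
  ultimately show ?thesis using pi_gt_zero by (simp add: field_simps)
qed

lemma col:
 fixes a b u :: "real^'m"
 assumes a: "norm a = 1" and b: "norm b = 1" and u: "norm u = 1" "u \<bullet> a = 0"
  defines "c \<equiv> a \<bullet> b"
 defines "r \<equiv> b - c *\<^sub>R a"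
 defines "w \<equiv> if r = 0 then u else r /\<^sub>R norm r"
 defines "\<theta> \<equiv> arccos c"
 shows "norm w = 1" "w \<bullet> a = 0" "b = cos \<theta> *\<^sub>R a + sin \<theta> *\<^sub>R w" "0 \<le> \<theta>" "\<theta> \<le> pi"
   "norm (b - a) = 2 * sin (\<theta>/2)"
proof -
  have aa: "a \<bullet> a = 1" and bb: "b \<bullet> b = 1" using a b by (simp_all add: power2_norm_eq_inner[symmetric])
  have cb: "\<bar>c\<bar> \<le> 1" using Cauchy_Schwarz_ineq2[of a b] a b c_def by simp
  have ra: "r \<bullet> a = 0" unfolding r_def c_def using aa by (simp add: inner_diff_left inner_diff_right inner_commute)
  have rr: "norm r ^ 2 = 1 - c^2" unfolding power2_norm_eq_inner r_def
    using aa bb by (simp add: inner_diff_left inner_diff_right c_def inner_commute power2_eq_square)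
  show w1: "norm w = 1" using u unfolding w_def by auto
  show "w \<bullet> a = 0" using u ra unfolding w_def by auto
  have cs: "cos \<theta> = c" "sin \<theta> = norm r"
  proof -
    show "cos \<theta> = c" using cb unfolding \<theta>_def by simp
    have "sin \<theta> = sqrt (1 - c^2)" using cb unfolding \<theta>_def by (simp add: sin_arccos)
    also have "\<dots> = norm r" unfolding rr[symmetric] by simp
    finally show "sin \<theta> = norm r" .
  qed
  have "b = c *\<^sub>R a + r" unfolding r_def by simp
  also have "r = norm r *\<^sub>R w" unfolding w_def by auto
  finally show "b = cos \<theta> *\<^sub>R a + sin \<theta> *\<^sub>R w" using cs by simp
  show t0: "0 \<le> \<theta>" "\<theta> \<le> pi" using cb unfolding \<theta>_def by (auto intro: arccos_lbound arccos_ubound)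
  have "norm (b - a) ^ 2 = 2 - 2 * c" unfolding power2_norm_eq_inner
    using aa bb by (simp add: inner_diff_left inner_diff_right c_def inner_commute)
  also have "\<dots> = (2 * sin (\<theta>/2))^2"
    using cos_double_sin[of "\<theta>/2"] cs by (simp add: power_mult_distrib)
  finally show "norm (b - a) = 2 * sin (\<theta>/2)"
  proof (rule power2_eq_imp_eq)
    show "0 \<le> 2 * sin (\<theta>/2)" using t0 sin_ge_zero[of "\<theta>/2"] by simp
  qed simp
qed


lemma Diag_mult: "(A ** Diag c) $ i $ j = A $ i $ j * c $ j"
proof -
  have "(A ** Diag c) $ i $ j = (\<Sum>k\<in>UNIV. A $ i $ k * (if k = j then c $ k else 0))"
    by (simp add: matrix_matrix_mult_def Diag_def)
  also have "\<dots> = (\<Sum>k\<in>UNIV. if k = j then A $ i $ k * c $ k else 0)"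
    by (rule sum.cong) auto
  also have "\<dots> = A $ i $ j * c $ j" by simp
  finally show ?thesis .
qed

lemma geod_entry: "geod D W v t $ i $ j = D $ i $ j * cos (v $ j * t) + W $ i $ j * sin (v $ j * t)"
  by (simp add: geod_def Diag_mult)

lemma tmult_diag: "(transpose W ** D) $ j $ j = column j W \<bullet> column j D"
  by (simp add: matrix_matrix_mult_def transpose_def column_def inner_vec_def)

lemma norm_sq_cols: "norm (M::real^'p^'m) ^ 2 = (\<Sum>j\<in>UNIV. norm (column j M) ^ 2)"
proof -
  have "norm M ^ 2 = (\<Sum>i\<in>UNIV. \<Sum>j\<in>UNIV. M $ i $ j * M $ i $ j)"
    by (simp add: power2_norm_eq_inner inner_vec_def)
  also have "\<dots> = (\<Sum>j\<in>UNIV. \<Sum>i\<in>UNIV. M $ i $ j * M $ i $ j)" by (rule sum.swap)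
  also have "\<dots> = (\<Sum>j\<in>UNIV. norm (column j M) ^ 2)"
    by (simp add: power2_norm_eq_inner inner_vec_def column_def)
  finally show ?thesis .
qed

lemma norm_sq_vec: "norm (x::real^'p) ^ 2 = (\<Sum>j\<in>UNIV. (x $ j) ^ 2)"
  unfolding power2_norm_eq_inner inner_vec_def by (simp add: power2_eq_square)

lemma column_chi: "column j (\<chi> i j. f i j) = (\<chi> i. f i j)"
  by (simp add: column_def)

theorem lemma1:
  fixes D1 D2 :: "real^'p^'m"
  assumes m2: "CARD('m) \<ge> 2"
    and D1: "D1 \<in> dict_set" and D2: "D2 \<in> dict_set"
  shows "\<exists>W v \<tau>. W \<in> W_set D1 \<and> v \<in> Sp_plus \<and> \<tau> \<ge> 0 \<and> \<tau> * infnorm v \<le> pi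
           \<and> D2 = geod D1 W v \<tau>
           \<and> (\<forall>j. 2 / pi * \<tau> * v $ j \<le> norm (column j D2 - column j D1)
                 \<and> norm (column j D2 - column j D1) = 2 * sin (\<tau> * v $ j / 2)
                 \<and> 2 * sin (\<tau> * v $ j / 2) \<le> \<tau> * v $ j)
           \<and> 2 / pi * \<tau> \<le> norm (D2 - D1) \<and> norm (D2 - D1) \<le> \<tau>
           \<and> (\<exists>W'. W' \<in> W_set D2 \<and> D1 = geod D2 W' v \<tau>)"
proof -
  define a where "a j = column j D1" for j
  define b where "b j = column j D2" for j
  have na: "norm (a j) = 1" and nb: "norm (b j) = 1" for j
    using D1 D2 unfolding a_def b_def dict_set_def by auto
  have "\<exists>u. norm u = 1 \<and> u \<bullet> a j = 0" for j
  proof -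
    obtain y where y: "y \<noteq> 0" "orthogonal (a j) y"
      using orthogonal_to_vector_exists[of "a j"] m2 by auto
    show ?thesis
      by (rule exI[of _ "y /\<^sub>R norm y"]) (use y in \<open>auto simp: orthogonal_def inner_commute\<close>)
  qed
  then obtain U where U: "\<And>j. norm (U j) = 1" "\<And>j. U j \<bullet> a j = 0" by metis
  define c where "c j = a j \<bullet> b j" for j
  define r where "r j = b j - c j *\<^sub>R a j" for j
  define w where "w j = (if r j = 0 then U j else r j /\<^sub>R norm (r j))" for j
  define \<theta> where "\<theta> j = arccos (c j)" for j
  have colj: "norm (w j) = 1" "w j \<bullet> a j = 0" "b j = cos (\<theta> j) *\<^sub>R a j + sin (\<theta> j) *\<^sub>R w j"
    "0 \<le> \<theta> j" "\<theta> j \<le> pi" "norm (b j - a j) = 2 * sin (\<theta> j / 2)" for j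
    using col[of "a j" "b j" "U j", OF na nb U(1) U(2)] unfolding w_def \<theta>_def r_def c_def by auto
  define \<Theta> :: "real^'p" where "\<Theta> = (\<chi> j. \<theta> j)"
  define \<tau> where "\<tau> = norm \<Theta>"
  define v :: "real^'p" where "v = (if \<tau> = 0 then axis undefined 1 else \<Theta> /\<^sub>R \<tau>)"
  have tau0: "\<tau> \<ge> 0" unfolding \<tau>_def by simp
  have vt: "\<tau> * v $ j = \<theta> j" for j
  proof (cases "\<tau> = 0")
    case True
    then have "\<Theta> = 0" unfolding \<tau>_def by simp
    then have "\<theta> j = 0" unfolding \<Theta>_def by (metis vec_lambda_beta zero_index)
    then show ?thesis using True by simp
  next
    case False
    then show ?thesis unfolding v_def \<Theta>_def by simp
  qed
  have vt': "v $ j * \<tau> = \<theta> j" for j using vt[of j] by (simp add: mult.commute)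
  define W where "W = (\<chi> i j. w j $ i)"
  define W' where "W' = (\<chi> i j. sin (\<theta> j) * a j $ i - cos (\<theta> j) * w j $ i)"
  have cW: "column j W = w j" for j unfolding W_def by (simp add: column_def vec_eq_iff)
  have cW': "column j W' = sin (\<theta> j) *\<^sub>R a j - cos (\<theta> j) *\<^sub>R w j" for j
    unfolding W'_def by (simp add: column_def vec_eq_iff)
  have aa: "a j \<bullet> a j = 1" and ww: "w j \<bullet> w j = 1" for j
    using na colj(1) by (simp_all add: power2_norm_eq_inner[symmetric])
  have aw: "a j \<bullet> w j = 0" for j using colj(2) by (simp add: inner_commute)
  have WD1: "W \<in> W_set D1"
    unfolding W_set_def using colj(1,2) by (simp add: tmult_diag cW a_def[symmetric] power2_norm_eq_inner[symmetric])
  have vS: "v \<in> Sp_plus"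
  proof (cases "\<tau> = 0")
    case True
    have "0 \<le> axis undefined (1::real) $ j" for j :: 'p by (simp add: axis_def)
    then show ?thesis using True unfolding Sp_plus_def v_def by simp
  next
    case False
    then have "norm v = 1" unfolding v_def \<tau>_def by simp
    moreover have "0 \<le> v $ j" for j using False tau0 colj(4)[of j] unfolding v_def \<Theta>_def by simp
    ultimately show ?thesis unfolding Sp_plus_def by simp
  qed
  have "\<tau> * infnorm v = infnorm (\<tau> *\<^sub>R v)" using tau0 by (simp add: infnorm_mul)
  also have "\<tau> *\<^sub>R v = \<Theta>" using vt unfolding \<Theta>_def by (simp add: vec_eq_iff)
  also have "infnorm \<Theta> \<le> pi" unfolding infnorm_cart
    by (rule cSup_least) (use colj(4,5) in \<open>auto simp: \<Theta>_def\<close>)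
  finally have inf: "\<tau> * infnorm v \<le> pi" .
  have geo: "D2 = geod D1 W v \<tau>"
  proof -
    have "D2 $ i $ j = D1 $ i $ j * cos (\<theta> j) + w j $ i * sin (\<theta> j)" for i j
    proof -
      have "D2 $ i $ j = b j $ i" unfolding b_def by (simp add: column_def)
      also have "\<dots> = cos (\<theta> j) * a j $ i + sin (\<theta> j) * w j $ i"
        by (subst colj(3)) simp
      finally show ?thesis unfolding a_def by (simp add: column_def mult.commute)
    qed
    then show ?thesis by (simp add: vec_eq_iff geod_entry vt' W_def)
  qed
  have cols: "column j D2 - column j D1 = b j - a j" for j unfolding a_def b_def by simp
  have per: "2 / pi * \<tau> * v $ j \<le> norm (column j D2 - column j D1)
                 \<and> norm (column j D2 - column j D1) = 2 * sin (\<tau> * v $ j / 2)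
                 \<and> 2 * sin (\<tau> * v $ j / 2) \<le> \<tau> * v $ j" for j
  proof -
    have "2 / pi * (\<theta> j / 2) \<le> sin (\<theta> j / 2)" using colj(4,5) by (intro jordan) auto
    moreover have "sin (\<theta> j / 2) \<le> \<theta> j / 2" using colj(4) by (intro sin_x_le_x) auto
    ultimately show ?thesis using colj(6) cols vt[of j] by (simp add: mult.assoc)
  qed
  have fro: "norm (D2 - D1) ^ 2 = (\<Sum>j\<in>UNIV. (2 * sin (\<theta> j / 2)) ^ 2)"
  proof -
    have "column j (D2 - D1) = b j - a j" for j unfolding a_def b_def by (simp add: column_def vec_eq_iff)
    then show ?thesis unfolding norm_sq_cols using colj(6) by simp
  qed
  have tau2: "\<tau> ^ 2 = (\<Sum>j\<in>UNIV. (\<theta> j) ^ 2)"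
    unfolding \<tau>_def norm_sq_vec \<Theta>_def by simp
  have up: "norm (D2 - D1) \<le> \<tau>"
  proof (rule power2_le_imp_le[OF _ tau0])
    show "norm (D2 - D1) ^ 2 \<le> \<tau> ^ 2" unfolding fro tau2
    proof (rule sum_mono)
      fix j
      have "0 \<le> 2 * sin (\<theta> j / 2)" using colj(4,5)[of j] sin_ge_zero[of "\<theta> j / 2"] by simp
      moreover have "2 * sin (\<theta> j / 2) \<le> \<theta> j" using colj(4)[of j] sin_x_le_x[of "\<theta> j / 2"] by simp
      ultimately show "(2 * sin (\<theta> j / 2))\<^sup>2 \<le> (\<theta> j)\<^sup>2" by (intro power_mono)
    qed
  qed
  have lo: "2 / pi * \<tau> \<le> norm (D2 - D1)"
  proof (rule power2_le_imp_le[OF _ norm_ge_zero])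
    have "(2 / pi * \<tau>) ^ 2 = (\<Sum>j\<in>UNIV. (2 / pi * \<theta> j) ^ 2)"
      unfolding power_mult_distrib tau2 sum_distrib_left ..
    also have "\<dots> \<le> (\<Sum>j\<in>UNIV. (2 * sin (\<theta> j / 2)) ^ 2)"
    proof (rule sum_mono)
      fix j
      have "0 \<le> 2 / pi * \<theta> j" using colj(4)[of j] by simp
      moreover have "2 / pi * \<theta> j \<le> 2 * sin (\<theta> j / 2)"
        using jordan[of "\<theta> j / 2"] colj(4,5)[of j] by simp
      ultimately show "(2 / pi * \<theta> j)\<^sup>2 \<le> (2 * sin (\<theta> j / 2))\<^sup>2" by (intro power_mono)
    qed
    finally show "(2 / pi * \<tau>) ^ 2 \<le> norm (D2 - D1) ^ 2" unfolding fro .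
  qed
  have W'D2: "W' \<in> W_set D2"
  proof -
    have o: "column j W' \<bullet> b j = 0" and n: "column j W' \<bullet> column j W' = 1" for j
    proof -
      have "column j W' \<bullet> b j = sin (\<theta> j) * cos (\<theta> j) * (a j \<bullet> a j) - cos (\<theta> j) * sin (\<theta> j) * (w j \<bullet> w j)
          + (sin (\<theta> j) * sin (\<theta> j) - cos (\<theta> j) * cos (\<theta> j)) * (a j \<bullet> w j)"
        unfolding cW' by (subst colj(3)) (simp add: inner_diff_left inner_add_right inner_commute algebra_simps)
      then show "column j W' \<bullet> b j = 0" using aa ww aw by simp
      have "column j W' \<bullet> column j W' = (sin (\<theta> j))^2 * (a j \<bullet> a j) + (cos (\<theta> j))^2 * (w j \<bullet> w j)
          - 2 * sin (\<theta> j) * cos (\<theta> j) * (a j \<bullet> w j)"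
        unfolding cW' by (simp add: inner_diff_left inner_diff_right inner_commute algebra_simps power2_eq_square)
      then show "column j W' \<bullet> column j W' = 1" using aa ww aw by simp
    qed
    show ?thesis unfolding W_set_def using o n by (simp add: tmult_diag b_def[symmetric])
  qed
  have geo': "D1 = geod D2 W' v \<tau>"
  proof -
    have "D1 $ i $ j = D2 $ i $ j * cos (\<theta> j) + W' $ i $ j * sin (\<theta> j)" for i j
    proof -
      have e: "D2 $ i $ j = cos (\<theta> j) * a j $ i + sin (\<theta> j) * w j $ i"
      proof -
        have "D2 $ i $ j = b j $ i" unfolding b_def by (simp add: column_def)
        also have "\<dots> = cos (\<theta> j) * a j $ i + sin (\<theta> j) * w j $ i"
          by (subst colj(3)) simp
        finally show ?thesis .
      qed
      have "D2 $ i $ j * cos (\<theta> j) + W' $ i $ j * sin (\<theta> j)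
          = ((sin (\<theta> j))^2 + (cos (\<theta> j))^2) * a j $ i"
        by (simp only: e W'_def vec_lambda_beta) algebra
      also have "\<dots> = D1 $ i $ j" by (simp only: sin_cos_squared_add mult_1_left) (simp add: a_def column_def)
      finally show ?thesis by simp
    qed
    then show ?thesis by (simp add: vec_eq_iff geod_entry vt')
  qed
  show ?thesis
    using WD1 vS tau0 inf geo per lo up W'D2 geo' by blast
qed
end
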